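(* Let $\alpha\in(0,1)$. There exists a constant $D'_\alpha>0$ such that for every $n\ge1$, every real array $\mathbf b=(b_{s,t})$ and every $x>0$, $$P\Big(\sum_{1\le s<t\le n}b_{s,t}C_{s,t}\varepsilon_s\varepsilon_t>x\Big)\le D'_\alpha\,\frac{1+\log^+x}{x^\alpha}\,\Gamma_n(\mathbf b).$$
   Context: $(\varepsilon_t)_{t\ge1}$ are i.i.d. symmetric $\alpha$-stable with $E e^{\mathrm i u\varepsilon_1}=e^{-|u|^\alpha}$. $\mathbf C=(C_0,C_{s,t},\ s,t=1,2,\dots)$ is a family of i.i.d. $S_1(1,0,0)$ (standard symmetric Cauchy, $E e^{\mathrm iuC_0}=e^{-|u|}$) random variables independent of $(\varepsilon_t)$. For a real array $\mathbf b=(b_{s,t})$, $\Gamma_n(\mathbf b)=\sum_{1\le s\ne t\le n}|b_{s,t}|^\alpha\big(1+\log^+\frac1{|b_{s,t}|}\big)$, with terms having $b_{s,t}=0$ equal to $0$. *)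

theory Defs
  imports "HOL-Probability.Probability"
begin

text \<open>Index type for the joint family of random variables:
  Eps t is epsilon_t (t >= 1), Cau0 is C_0, Cau s t is C_{s,t} (s,t >= 1).\<close>
datatype rv_idx = Eps nat | Cau0 | Cau nat nat

definition rv_index_set :: "rv_idx set" where
  "rv_index_set = {Eps t | t. t \<ge> 1} \<union> {Cau0} \<union> {Cau s t | s t. s \<ge> 1 \<and> t \<ge> 1}"

definition joint_family ::
  "(nat \<Rightarrow> 'a \<Rightarrow> real) \<Rightarrow> ('a \<Rightarrow> real) \<Rightarrow> (nat \<Rightarrow> nat \<Rightarrow> 'a \<Rightarrow> real) \<Rightarrow> rv_idx \<Rightarrow> 'a \<Rightarrow> real" where
  "joint_family eps C0 C i = (case i of Eps t \<Rightarrow> eps t | Cau0 \<Rightarrow> C0 | Cau s t \<Rightarrow> C s t)"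

definition log_plus :: "real \<Rightarrow> real" where
  "log_plus y = max 0 (ln y)"

definition Gamma_n :: "real \<Rightarrow> nat \<Rightarrow> (nat \<Rightarrow> nat \<Rightarrow> real) \<Rightarrow> real" where
  "Gamma_n \<alpha> n b = (\<Sum>(s,t)\<in>{(s,t). s \<in> {1..n} \<and> t \<in> {1..n} \<and> s \<noteq> t}.
      if b s t = 0 then 0 else \<bar>b s t\<bar> powr \<alpha> * (1 + log_plus (1 / \<bar>b s t\<bar>)))"

end

theory Submission
  imports Defs
begin


lemma main_bound:
  assumes "real_distribution \<mu>" "u > 0"
  shows "Re (CLBINT t:{-u..u}. 1 - char \<mu> t) \<ge> u * measure \<mu> {x. abs x \<ge> 2 / u}"
proof -
  interpret Mn: real_distribution \<mu> by fact
  have *: "\<And>u x. u > 0 \<Longrightarrow> x \<noteq> 0 \<Longrightarrow> (CLBINT t:{-u..u}. 1 - iexp (t * x)) =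
      2 * (u  - sin (u * x) / x)"
  proof -
    fix u :: real and x :: real
    assume "u > 0" and "x \<noteq> 0"
    hence "(CLBINT t:{-u..u}. 1 - iexp (t * x)) = (CLBINT t=-u..u. 1 - iexp (t * x))"
      by (subst interval_integral_Icc, auto)
    also have "\<dots> = (CLBINT t=-u..ereal 0. 1 - iexp (t * x)) + (CLBINT t= ereal 0..u. 1 - iexp (t * x))"
      using \<open>u > 0\<close>
      by (subst interval_integral_sum; force simp add: interval_integrable_isCont)
    also have "\<dots> = (CLBINT t=ereal 0..u. 1 - iexp (t * -x)) + (CLBINT t=ereal 0..u. 1 - iexp (t * x))"
      by (subst interval_integral_reflect, auto)
    also have "... = CLBINT xa=ereal 0..ereal u. 1 - iexp (xa * - x) + (1 - iexp (xa * x))"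
      by (subst interval_lebesgue_integral_add (2) [symmetric]) (auto simp: interval_integrable_isCont)
    also have "\<dots> = (LBINT t=ereal 0..u. 2 - 2 * cos (t * x))"
      unfolding exp_Euler cos_of_real by (simp flip: interval_lebesgue_integral_of_real)
    also have "\<dots> = 2 * u - 2 * sin (u * x) / x"
      by (subst interval_lebesgue_integral_diff)
         (auto intro!: interval_integrable_isCont
               simp: interval_lebesgue_integral_of_real integral_cos [OF \<open>x \<noteq> 0\<close>] mult.commute[of _ x])
    finally show "(CLBINT t:{-u..u}. 1 - iexp (t * x)) = 2 * (u  - sin (u * x) / x)"
      by (simp add: field_simps)
  qed
    interpret P: pair_sigma_finite "\<mu>" lborel ..
    have Mn1 [simp]: "measure \<mu> UNIV = 1" by (metis Mn.prob_space Mn.space_eq_univ)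
    have Mn2 [simp]: "\<And>x. complex_integrable \<mu> (\<lambda>t. exp (\<i> * complex_of_real (x * t)))"
      by (rule Mn.integrable_const_bound [where B = 1], auto)
    have Mn3: "set_integrable (\<mu> \<Otimes>\<^sub>M lborel) (UNIV \<times> {- u..u}) (\<lambda>a. 1 - exp (\<i> * complex_of_real (snd a * fst a)))"
      using \<open>0 < u\<close>
      unfolding set_integrable_def
      by (intro integrableI_bounded_set_indicator [where B="2"])
         (auto simp: lborel.emeasure_pair_measure_Times ennreal_mult_less_top not_less top_unique
               split: split_indicator
               intro!: order_trans [OF norm_triangle_ineq4])
    have "(CLBINT t:{-u..u}. 1 - char \<mu> t) =
        (CLBINT t:{-u..u}. (CLINT x | \<mu>. 1 - iexp (t * x)))"
      unfolding char_def by (rule set_lebesgue_integral_cong, auto simp del: of_real_mult)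
    also have "\<dots> = (CLBINT t. (CLINT x | \<mu>. indicator {-u..u} t *\<^sub>R (1 - iexp (t * x))))"
      unfolding set_lebesgue_integral_def
      by (rule Bochner_Integration.integral_cong) (auto split: split_indicator)
    also have "\<dots> = (CLINT x | \<mu>. (CLBINT t:{-u..u}. 1 - iexp (t * x)))"
      using Mn3 by (subst P.Fubini_integral) (auto simp: indicator_times split_beta' set_integrable_def set_lebesgue_integral_def)
    also have "\<dots> = (CLINT x | \<mu>. (if x = 0 then 0 else 2 * (u  - sin (u * x) / x)))"
      using \<open>u > 0\<close> by (intro Bochner_Integration.integral_cong, auto simp add: * simp del: of_real_mult)
    also have "\<dots> = (LINT x | \<mu>. (if x = 0 then 0 else 2 * (u  - sin (u * x) / x)))"
      by (rule integral_complex_of_real)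
    finally have "Re (CLBINT t:{-u..u}. 1 - char \<mu> t) =
       (LINT x | \<mu>. (if x = 0 then 0 else 2 * (u  - sin (u * x) / x)))" by simp
    also have "\<dots> \<ge> (LINT x : {x. abs x \<ge> 2 / u} | \<mu>. u)"
    proof -
      have "complex_integrable \<mu> (\<lambda>x. CLBINT t:{-u..u}. 1 - iexp (snd (x, t) * fst (x, t)))"
        using Mn3 unfolding set_integrable_def set_lebesgue_integral_def
        by (intro P.integrable_fst) (simp add: indicator_times split_beta')
      hence "complex_integrable \<mu> (\<lambda>x. if x = 0 then 0 else 2 * (u  - sin (u * x) / x))"
        using \<open>u > 0\<close>
        unfolding set_integrable_def
        by (subst Bochner_Integration.integrable_cong) (auto simp add: * simp del: of_real_mult)
      hence **: "integrable \<mu> (\<lambda>x. if x = 0 then 0 else 2 * (u  - sin (u * x) / x))"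
        unfolding complex_of_real_integrable_eq .
      have "2 * sin x \<le> x" if "2 \<le> x" for x :: real
        by (rule order_trans[OF _ \<open>2 \<le> x\<close>]) auto
      moreover have "x \<le> 2 * sin x" if "x \<le> - 2" for x :: real
        by (rule order_trans[OF \<open>x \<le> - 2\<close>]) auto
      moreover have "x < 0 \<Longrightarrow> x \<le> sin x" for x :: real
        using sin_x_le_x[of "-x"] by simp
      ultimately show ?thesis
        using \<open>u > 0\<close> unfolding set_lebesgue_integral_def
        by (intro integral_mono [OF _ **])
           (auto simp: divide_simps sin_x_le_x mult.commute[of u] mult_neg_pos top_unique less_top[symmetric]
                 split: split_indicator)
    qed
    also (xtrans) have "(LINT x : {x. abs x \<ge> 2 / u} | \<mu>. u) = u * measure \<mu> {x. abs x \<ge> 2 / u}"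
      unfolding set_lebesgue_integral_def
      by (simp add: Mn.emeasure_eq_measure)
    finally show "Re (CLBINT t:{-u..u}. 1 - char \<mu> t) \<ge> u * measure \<mu> {x. abs x \<ge> 2 / u}" .
qed



lemma tail_char:
  assumes mu: "real_distribution \<mu>" and a: "0 < a" "a \<le> 1"
    and ch: "\<And>u. char \<mu> u = complex_of_real (exp (- (\<bar>u\<bar> powr a)))"
    and y: "y > 0"
  shows "measure \<mu> {x. \<bar>x\<bar> \<ge> y} \<le> 4 * y powr (-a)"
proof -
  define u where "u = 2 / y"
  have u: "u > 0" using y by (simp add: u_def)
  have yu: "2 / u = y" using y by (simp add: u_def)
  have int1: "set_integrable lborel {-u..u} (\<lambda>t. 1 - exp (- (\<bar>t\<bar> powr a)))"
    unfolding set_integrable_def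
    by (intro integrableI_bounded_set_indicator [where B="1"])
       (auto simp: emeasure_lborel_Icc_eq)
  have int2: "set_integrable lborel {-u..u} (\<lambda>t. u powr a)"
    unfolding set_integrable_def
    by (intro integrableI_bounded_set_indicator [where B="u powr a"])
       (auto simp: emeasure_lborel_Icc_eq)
  have "(CLBINT t:{-u..u}. 1 - char \<mu> t) = (CLBINT t:{-u..u}. complex_of_real (1 - exp (- (\<bar>t\<bar> powr a))))"
    by (simp add: ch)
  also have "\<dots> = complex_of_real (LBINT t:{-u..u}. 1 - exp (- (\<bar>t\<bar> powr a)))"
    by (rule set_integral_complex_of_real)
  finally have eq: "Re (CLBINT t:{-u..u}. 1 - char \<mu> t) = (LBINT t:{-u..u}. 1 - exp (- (\<bar>t\<bar> powr a)))"
    by simp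
  have "(LBINT t:{-u..u}. 1 - exp (- (\<bar>t\<bar> powr a))) \<le> (LBINT t:{-u..u}. u powr a)"
  proof (rule set_integral_mono[OF int1 int2])
    fix t assume t: "t \<in> {-u..u}"
    have "1 - exp (- (\<bar>t\<bar> powr a)) \<le> \<bar>t\<bar> powr a"
      using exp_ge_add_one_self[of "- (\<bar>t\<bar> powr a)"] by linarith
    also have "\<dots> \<le> u powr a"
      using t a by (intro powr_mono2) auto
    finally show "1 - exp (- (\<bar>t\<bar> powr a)) \<le> u powr a" .
  qed
  also have "\<dots> = 2 * u * u powr a"
    using u by (simp add: set_integral_const emeasure_lborel_Icc_eq measure_lborel_Icc)
  finally have "u * measure \<mu> {x. \<bar>x\<bar> \<ge> 2/u} \<le> 2 * u * u powr a"
    using main_bound[OF mu u] eq by linarith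
  hence "measure \<mu> {x. \<bar>x\<bar> \<ge> y} \<le> 2 * u powr a"
    using u yu by (simp add: mult.assoc)
  also have "u powr a = 2 powr a * y powr (-a)"
    unfolding u_def using y by (simp add: powr_divide powr_minus_divide)
  also have "2 powr a \<le> 2"
    using a powr_mono[of a 1 2] by simp
  finally show ?thesis
    using y by (smt (verit) mult_right_mono powr_ge_zero)
qed



lemma layer_cake:
  assumes M: "sigma_finite_measure M" and f: "f \<in> borel_measurable M" and nn: "\<And>\<omega>. 0 \<le> f \<omega>"
  shows "(\<integral>\<^sup>+\<omega>. ennreal (f \<omega>) \<partial>M) =
         (\<integral>\<^sup>+t. indicator {0<..} t * emeasure M {\<omega>\<in>space M. t < f \<omega>} \<partial>lborel)"
proof -
  interpret P: pair_sigma_finite M lborel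
    using M by (simp add: pair_sigma_finite_def lborel.sigma_finite_measure_axioms)
  have 1: "ennreal (f \<omega>) = (\<integral>\<^sup>+t. (if 0 < t \<and> t < f \<omega> then 1 else 0) \<partial>lborel)" for \<omega>
  proof -
    have "(\<lambda>t. (if 0 < t \<and> t < f \<omega> then 1 else 0) :: ennreal) = indicator {0<..<f \<omega>}"
      by (auto simp: fun_eq_iff indicator_def)
    then show ?thesis using nn[of \<omega>] by simp
  qed
  have meas: "(\<lambda>(\<omega>, t). (if 0 < t \<and> t < f \<omega> then 1 else 0) :: ennreal) \<in> borel_measurable (M \<Otimes>\<^sub>M lborel)"
    using f by measurable
  have "(\<integral>\<^sup>+\<omega>. ennreal (f \<omega>) \<partial>M) = (\<integral>\<^sup>+\<omega>. (\<integral>\<^sup>+t. (if 0 < t \<and> t < f \<omega> then 1 else 0) \<partial>lborel) \<partial>M)"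
    by (simp add: 1[symmetric])
  also have "\<dots> = (\<integral>\<^sup>+t. (\<integral>\<^sup>+\<omega>. (if 0 < t \<and> t < f \<omega> then 1 else 0) \<partial>M) \<partial>lborel)"
    using P.Fubini'[of "\<lambda>\<omega> t. (if 0 < t \<and> t < f \<omega> then 1 else 0) :: ennreal", OF meas] by simp
  also have "\<dots> = (\<integral>\<^sup>+t. indicator {0<..} t * emeasure M {\<omega>\<in>space M. t < f \<omega>} \<partial>lborel)"
  proof (rule nn_integral_cong)
    fix t :: real
    have "(\<integral>\<^sup>+\<omega>. (if 0 < t \<and> t < f \<omega> then 1 else 0) \<partial>M) = (\<integral>\<^sup>+\<omega>. indicator {0<..} t * indicator {\<omega>\<in>space M. t < f \<omega>} \<omega> \<partial>M)"
      by (intro nn_integral_cong) (auto simp: indicator_def)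
    also have "\<dots> = indicator {0<..} t * emeasure M {\<omega>\<in>space M. t < f \<omega>}"
      using f by (subst nn_integral_cmult_indicator) auto
    finally show "(\<integral>\<^sup>+\<omega>. (if 0 < t \<and> t < f \<omega> then 1 else 0) \<partial>M) = indicator {0<..} t * emeasure M {\<omega>\<in>space M. t < f \<omega>}" .
  qed
  finally show ?thesis .
qed



lemma L1:
  assumes P: "prob_space M" and X: "X \<in> borel_measurable M"
    and K: "K \<ge> 0" and a: "0 < a" "a < 1" and c: "c > 0"
    and tail: "\<And>y. y > 0 \<Longrightarrow> measure M {\<omega>\<in>space M. \<bar>X \<omega>\<bar> \<ge> y} \<le> K * y powr (-a)"
  shows "(\<integral>\<^sup>+\<omega>. ennreal (min 1 (c * \<bar>X \<omega>\<bar>)) \<partial>M) \<le> ennreal (K * c powr a / (1 - a))"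
proof -
  interpret prob_space M by fact
  have "(\<integral>\<^sup>+\<omega>. ennreal (min 1 (c * \<bar>X \<omega>\<bar>)) \<partial>M) =
      (\<integral>\<^sup>+t. indicator {0<..} t * emeasure M {\<omega>\<in>space M. t < min 1 (c * \<bar>X \<omega>\<bar>)} \<partial>lborel)"
    using X c by (intro layer_cake) (auto simp: sigma_finite_measure_axioms)
  also have "\<dots> \<le> (\<integral>\<^sup>+t. ennreal (indicator {0..1} t * (K * c powr a * t powr (-a))) \<partial>lborel)"
  proof (rule nn_integral_mono)
    fix t :: real
    show "indicator {0<..} t * emeasure M {\<omega>\<in>space M. t < min 1 (c * \<bar>X \<omega>\<bar>)}
          \<le> ennreal (indicator {0..1} t * (K * c powr a * t powr (-a)))"
    proof (cases "0 < t \<and> t < 1")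
      case True
      then have t: "0 < t" "t < 1" by auto
      have sub: "{\<omega>\<in>space M. t < min 1 (c * \<bar>X \<omega>\<bar>)} \<subseteq> {\<omega>\<in>space M. \<bar>X \<omega>\<bar> \<ge> t / c}"
        using c by (auto simp: field_simps)
      have "emeasure M {\<omega>\<in>space M. t < min 1 (c * \<bar>X \<omega>\<bar>)} \<le> emeasure M {\<omega>\<in>space M. \<bar>X \<omega>\<bar> \<ge> t / c}"
        using X by (intro emeasure_mono sub) measurable
      also have "\<dots> = ennreal (measure M {\<omega>\<in>space M. \<bar>X \<omega>\<bar> \<ge> t / c})"
        by (simp add: emeasure_eq_measure)
      also have "\<dots> \<le> ennreal (K * (t / c) powr (-a))"
        using tail[of "t/c"] t c by (intro ennreal_leI) auto
      also have "K * (t / c) powr (-a) = K * c powr a * t powr (-a)"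
        using t c by (simp add: powr_divide powr_minus_divide)
      finally show ?thesis using t by (simp add: indicator_def)
    next
      case False
      then consider "t \<le> 0" | "t \<ge> 1" by linarith
      then show ?thesis
      proof cases
        case 1 then show ?thesis by (simp add: indicator_def)
      next
        case 2
        then have "{\<omega>\<in>space M. t < min 1 (c * \<bar>X \<omega>\<bar>)} = {}" by auto
        then show ?thesis by (metis emeasure_empty mult_zero_right zero_le)
      qed
    qed
  qed
  also have "\<dots> = ennreal (K * c powr a * (1 powr (-a + 1) / (-a + 1)))"
  proof -
    have "((\<lambda>t. K * c powr a * t powr (-a)) has_integral (K * c powr a * (1 powr (-a + 1) / (-a + 1)))) {0..1}"
      using a by (intro has_integral_mult_right has_integral_powr_from_0) auto
    from nn_integral_has_integral_lebesgue[OF _ this]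
    show ?thesis using K c by (simp add: mult_ac)
  qed
  also have "\<dots> = ennreal (K * c powr a / (1 - a))" by simp
  finally show ?thesis .
qed



lemma L2:
  assumes P: "prob_space M" and X: "X \<in> borel_measurable M"
    and K: "K \<ge> 0" and a: "0 < p" "p < a"
    and tail: "\<And>y. y > 0 \<Longrightarrow> measure M {\<omega>\<in>space M. \<bar>X \<omega>\<bar> \<ge> y} \<le> K * y powr (-a)"
  shows "(\<integral>\<^sup>+\<omega>. ennreal (\<bar>X \<omega>\<bar> powr p) \<partial>M) \<le> ennreal (1 + K * p / (a - p))"
proof -
  interpret prob_space M by fact
  have "(\<integral>\<^sup>+\<omega>. ennreal (\<bar>X \<omega>\<bar> powr p) \<partial>M) =
      (\<integral>\<^sup>+t. indicator {0<..} t * emeasure M {\<omega>\<in>space M. t < \<bar>X \<omega>\<bar> powr p} \<partial>lborel)"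
    using X by (intro layer_cake) (auto simp: sigma_finite_measure_axioms)
  also have "\<dots> \<le> (\<integral>\<^sup>+t. ennreal (indicator {0..1} t) + ennreal (indicator {1..} t * (K * t powr (-a/p))) \<partial>lborel)"
  proof (rule nn_integral_mono)
    fix t :: real
    show "indicator {0<..} t * emeasure M {\<omega>\<in>space M. t < \<bar>X \<omega>\<bar> powr p}
          \<le> ennreal (indicator {0..1} t) + ennreal (indicator {1..} t * (K * t powr (-a/p)))"
    proof (cases "0 < t")
      case True
      then have t: "0 < t" by auto
      have sub: "{\<omega>\<in>space M. t < \<bar>X \<omega>\<bar> powr p} \<subseteq> {\<omega>\<in>space M. \<bar>X \<omega>\<bar> \<ge> t powr (1/p)}"
      proof safe
        fix \<omega> assume "\<omega> \<in> space M" "t < \<bar>X \<omega>\<bar> powr p"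
        then have "t powr (1/p) \<le> (\<bar>X \<omega>\<bar> powr p) powr (1/p)"
          using t a by (intro powr_mono2) auto
        also have "\<dots> = \<bar>X \<omega>\<bar>" using a by (simp add: powr_powr)
        finally show "t powr (1/p) \<le> \<bar>X \<omega>\<bar>" .
      qed
      have e1: "emeasure M {\<omega>\<in>space M. t < \<bar>X \<omega>\<bar> powr p} \<le> 1"
        by (rule emeasure_le_1)
      have "emeasure M {\<omega>\<in>space M. t < \<bar>X \<omega>\<bar> powr p} \<le> emeasure M {\<omega>\<in>space M. \<bar>X \<omega>\<bar> \<ge> t powr (1/p)}"
        using X by (intro emeasure_mono sub) measurable
      also have "\<dots> = ennreal (measure M {\<omega>\<in>space M. \<bar>X \<omega>\<bar> \<ge> t powr (1/p)})"
        by (simp add: emeasure_eq_measure)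
      also have "\<dots> \<le> ennreal (K * (t powr (1/p)) powr (-a))"
        using tail[of "t powr (1/p)"] t by (intro ennreal_leI) auto
      also have "K * (t powr (1/p)) powr (-a) = K * t powr (-a/p)"
        using t by (simp add: powr_powr)
      finally have e2: "emeasure M {\<omega>\<in>space M. t < \<bar>X \<omega>\<bar> powr p} \<le> ennreal (K * t powr (-a/p))" .
      show ?thesis
      proof (cases "t \<le> 1")
        case True
        then have "indicator {0<..} t * emeasure M {\<omega>\<in>space M. t < \<bar>X \<omega>\<bar> powr p} \<le> ennreal (indicator {0..1} t)"
          using t e1 by (simp add: indicator_def)
        also have "\<dots> \<le> ennreal (indicator {0..1} t) + ennreal (indicator {1..} t * (K * t powr (-a/p)))"
          by (rule add_increasing2) auto
        finally show ?thesis .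
      next
        case False
        then show ?thesis using t e2 by (simp add: indicator_def)
      qed
    next
      case False
      then show ?thesis by (simp add: indicator_def)
    qed
  qed
  also have "\<dots> = (\<integral>\<^sup>+t. ennreal (indicator {0..1::real} t) \<partial>lborel) + (\<integral>\<^sup>+t. ennreal (indicator {1..} t * (K * t powr (-a/p))) \<partial>lborel)"
    by (subst nn_integral_add) measurable
  also have "(\<integral>\<^sup>+t. ennreal (indicator {0..1::real} t) \<partial>lborel) = ennreal 1"
  proof -
    have "(\<integral>\<^sup>+t. ennreal (indicator {0..1::real} t) \<partial>lborel) = (\<integral>\<^sup>+t. indicator {0..1::real} t \<partial>lborel)"
      by (simp add: ennreal_indicator)
    also have "\<dots> = emeasure lborel {0..1::real}" by (rule nn_integral_indicator) simp
    finally show ?thesis by simp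
  qed
  also have "(\<integral>\<^sup>+t. ennreal (indicator {1..} t * (K * t powr (-a/p))) \<partial>lborel) = ennreal (K * (- (1 powr (-a/p+1)) / (-a/p+1)))"
  proof -
    have "((\<lambda>t. K * t powr (-a/p)) has_integral (K * (- (1 powr (-a/p+1)) / (-a/p+1)))) {1..}"
      using a by (intro has_integral_mult_right has_integral_powr_to_inf) (auto simp: field_simps)
    from nn_integral_has_integral_lebesgue[OF _ this]
    show ?thesis using K a by simp
  qed
  also have "K * (- (1 powr (-a/p+1)) / (-a/p+1)) = K * p / (a - p)"
    using a by (simp add: field_simps)
  finally show ?thesis using K a by (simp add: ennreal_plus[symmetric] del: ennreal_plus ennreal_1)
qed



lemma cond:
  fixes h :: "real \<Rightarrow> real \<Rightarrow> ennreal"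
  assumes P: "prob_space M" and ind: "prob_space.indep_var M borel X borel V"
    and h: "(\<lambda>(x, v). h x v) \<in> borel_measurable (borel \<Otimes>\<^sub>M borel)"
  shows "(\<integral>\<^sup>+\<omega>. h (X \<omega>) (V \<omega>) \<partial>M) = (\<integral>\<^sup>+\<omega>'. (\<integral>\<^sup>+\<omega>. h (X \<omega>) (V \<omega>') \<partial>M) \<partial>M)"
proof -
  interpret prob_space M by fact
  have eq: "distr M borel X \<Otimes>\<^sub>M distr M borel V = distr M (borel \<Otimes>\<^sub>M borel) (\<lambda>x. (X x, V x))"
    and rX: "random_variable borel X" and rV: "random_variable borel V"
    using ind indep_var_distribution_eq by auto
  interpret PX: prob_space "distr M borel X" by (rule prob_space_distr[OF rX])
  interpret PV: prob_space "distr M borel V" by (rule prob_space_distr[OF rV])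
  interpret PP: pair_prob_space "distr M borel X" "distr M borel V" ..
  have hm: "(\<lambda>(x, v). h x v) \<in> borel_measurable (distr M borel X \<Otimes>\<^sub>M distr M borel V)"
    using h by (simp add: measurable_def space_pair_measure sets_pair_measure)
  have "(\<integral>\<^sup>+\<omega>. h (X \<omega>) (V \<omega>) \<partial>M) = (\<integral>\<^sup>+z. (\<lambda>(x, v). h x v) z \<partial>distr M (borel \<Otimes>\<^sub>M borel) (\<lambda>x. (X x, V x)))"
    using rX rV h by (subst nn_integral_distr) (auto intro: measurable_Pair)
  also have "\<dots> = (\<integral>\<^sup>+z. (\<lambda>(x, v). h x v) z \<partial>(distr M borel X \<Otimes>\<^sub>M distr M borel V))"
    by (simp add: eq)
  also have "\<dots> = (\<integral>\<^sup>+v. (\<integral>\<^sup>+x. h x v \<partial>distr M borel X) \<partial>distr M borel V)"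
    using PP.nn_integral_snd[OF hm] by simp
  also have "\<dots> = (\<integral>\<^sup>+\<omega>'. (\<integral>\<^sup>+x. h x (V \<omega>') \<partial>distr M borel X) \<partial>M)"
  proof -
    have meas: "(\<lambda>v. \<integral>\<^sup>+ x. h x v \<partial>distr M borel X) \<in> borel_measurable borel"
    proof -
      have "(\<lambda>(v, x). h x v) \<in> borel_measurable (borel \<Otimes>\<^sub>M borel)"
        using measurable_pair_swap[OF h] by simp
      then have "(\<lambda>(v, x). h x v) \<in> borel_measurable (borel \<Otimes>\<^sub>M distr M borel X)"
        by (simp add: measurable_def space_pair_measure sets_pair_measure)
      from PX.borel_measurable_nn_integral[OF this] show ?thesis by simp
    qed
    have meas2: "(\<lambda>v. \<integral>\<^sup>+ x. h x v \<partial>distr M borel X) \<in> borel_measurable (distr M borel V)"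
      using meas by simp
    show ?thesis using nn_integral_distr[OF rV meas2] by simp
  qed
  also have "\<dots> = (\<integral>\<^sup>+\<omega>'. (\<integral>\<^sup>+\<omega>. h (X \<omega>) (V \<omega>') \<partial>M) \<partial>M)"
  proof (rule nn_integral_cong)
    fix \<omega>' show "(\<integral>\<^sup>+x. h x (V \<omega>') \<partial>distr M borel X) = (\<integral>\<^sup>+\<omega>. h (X \<omega>) (V \<omega>') \<partial>M)"
      using rX h by (subst nn_integral_distr) (auto simp: measurable_Pair2)
  qed
  finally show ?thesis .
qed



lemma min_powr_bound:
  fixes c K p al :: real
  assumes "c \<ge> 0" "K \<ge> 1" "0 < p" "p \<le> al"
  shows "min 1 (K * c powr al) \<le> K * c powr p"
proof (cases "c \<ge> 1")
  case True
  then have "1 \<le> c powr p" using assms by (simp add: ge_one_powr_ge_zero)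
  then have "1 \<le> K * c powr p" using assms by (metis mult_mono' mult_1 order_trans zero_le_one)
  then show ?thesis by simp
next
  case False
  then have "c powr al \<le> c powr p"
    using assms by (intro powr_mono') auto
  then have "K * c powr al \<le> K * c powr p" using assms by simp
  then show ?thesis by simp
qed

lemma P0:
  assumes P: "prob_space M"
    and X: "X \<in> borel_measurable M" and X2: "X2 \<in> borel_measurable M" and X3: "X3 \<in> borel_measurable M"
    and al: "0 < al" "al < 1" and p: "0 < p" "p < al" and a: "a > 0"
    and tX: "\<And>y. y > 0 \<Longrightarrow> measure M {\<omega>\<in>space M. \<bar>X \<omega>\<bar> \<ge> y} \<le> 4 * y powr (-al)"
    and tX2: "\<And>y. y > 0 \<Longrightarrow> measure M {\<omega>\<in>space M. \<bar>X2 \<omega>\<bar> \<ge> y} \<le> 4 * y powr (-al)"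
    and tX3: "\<And>y. y > 0 \<Longrightarrow> measure M {\<omega>\<in>space M. \<bar>X3 \<omega>\<bar> \<ge> y} \<le> 4 * y powr (-1)"
    and ind1: "prob_space.indep_var M borel X borel (\<lambda>\<omega>. X2 \<omega> * X3 \<omega>)"
    and ind2: "prob_space.indep_var M borel X2 borel X3"
  shows "(\<integral>\<^sup>+\<omega>. ennreal (min 1 (a * \<bar>X \<omega> * (X2 \<omega> * X3 \<omega>)\<bar>)) \<partial>M)
     \<le> ennreal (4 / (1 - al) * a powr p * ((1 + 4 * p / (al - p)) * (1 + 4 * p / (1 - p))))"
proof -
  interpret prob_space M by fact
  note [measurable] = X X2 X3
  define K1 where "K1 = 4 / (1 - al)"
  have K1: "K1 \<ge> 1" using al by (simp add: K1_def)
  have inner: "(\<integral>\<^sup>+\<omega>. ennreal (min 1 (a * \<bar>X \<omega> * v\<bar>)) \<partial>M) \<le> ennreal (K1 * (a * \<bar>v\<bar>) powr p)" for v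
  proof (cases "v = 0")
    case True then show ?thesis by simp
  next
    case False
    have le1: "(\<integral>\<^sup>+\<omega>. ennreal (min 1 (a * \<bar>X \<omega> * v\<bar>)) \<partial>M) \<le> ennreal 1"
    proof -
      have "(\<integral>\<^sup>+\<omega>. ennreal (min 1 (a * \<bar>X \<omega> * v\<bar>)) \<partial>M) \<le> (\<integral>\<^sup>+\<omega>. 1 \<partial>M)"
        by (intro nn_integral_mono) auto
      then show ?thesis by (simp add: emeasure_space_1)
    qed
    have "(\<integral>\<^sup>+\<omega>. ennreal (min 1 (a * \<bar>X \<omega> * v\<bar>)) \<partial>M) = (\<integral>\<^sup>+\<omega>. ennreal (min 1 ((a * \<bar>v\<bar>) * \<bar>X \<omega>\<bar>)) \<partial>M)"
      by (intro nn_integral_cong) (simp add: abs_mult mult_ac)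
    also have "\<dots> \<le> ennreal (4 * (a * \<bar>v\<bar>) powr al / (1 - al))"
      using False a al by (intro L1[OF P X _ al]) (auto intro: tX)
    finally have le2: "(\<integral>\<^sup>+\<omega>. ennreal (min 1 (a * \<bar>X \<omega> * v\<bar>)) \<partial>M) \<le> ennreal (K1 * (a * \<bar>v\<bar>) powr al)"
      by (simp add: K1_def)
    show ?thesis
    proof (cases "a * \<bar>v\<bar> \<ge> 1")
      case True
      then have "1 \<le> (a * \<bar>v\<bar>) powr p" using p by (simp add: ge_one_powr_ge_zero)
      then have "1 \<le> K1 * (a * \<bar>v\<bar>) powr p" using K1 by (metis mult_mono' mult_1 order_trans zero_le_one)
      then show ?thesis using le1 by (meson ennreal_leI order_trans)
    next
      case False
      then have "(a * \<bar>v\<bar>) powr al \<le> (a * \<bar>v\<bar>) powr p"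
        using p a by (intro powr_mono') auto
      then have "K1 * (a * \<bar>v\<bar>) powr al \<le> K1 * (a * \<bar>v\<bar>) powr p" using K1 by simp
      then show ?thesis using le2 by (meson ennreal_leI order_trans)
    qed
  qed
  have "(\<integral>\<^sup>+\<omega>. ennreal (min 1 (a * \<bar>X \<omega> * (X2 \<omega> * X3 \<omega>)\<bar>)) \<partial>M)
      = (\<integral>\<^sup>+\<omega>'. (\<integral>\<^sup>+\<omega>. ennreal (min 1 (a * \<bar>X \<omega> * (X2 \<omega>' * X3 \<omega>')\<bar>)) \<partial>M) \<partial>M)"
    by (rule cond[OF P ind1, where h="\<lambda>x v. ennreal (min 1 (a * \<bar>x * v\<bar>))"]) measurable
  also have "\<dots> \<le> (\<integral>\<^sup>+\<omega>'. ennreal (K1 * a powr p) * ennreal (\<bar>X2 \<omega>'\<bar> powr p * \<bar>X3 \<omega>'\<bar> powr p) \<partial>M)"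
  proof (rule nn_integral_mono)
    fix \<omega>'
    have "(a * \<bar>X2 \<omega>' * X3 \<omega>'\<bar>) powr p = a powr p * (\<bar>X2 \<omega>'\<bar> powr p * \<bar>X3 \<omega>'\<bar> powr p)"
      using a by (simp add: abs_mult powr_mult)
    then show "(\<integral>\<^sup>+\<omega>. ennreal (min 1 (a * \<bar>X \<omega> * (X2 \<omega>' * X3 \<omega>')\<bar>)) \<partial>M)
        \<le> ennreal (K1 * a powr p) * ennreal (\<bar>X2 \<omega>'\<bar> powr p * \<bar>X3 \<omega>'\<bar> powr p)"
      using inner[of "X2 \<omega>' * X3 \<omega>'"] K1
      by (simp add: ennreal_mult[symmetric] mult_ac)
  qed
  also have "\<dots> = ennreal (K1 * a powr p) * (\<integral>\<^sup>+\<omega>'. ennreal (\<bar>X2 \<omega>'\<bar> powr p * \<bar>X3 \<omega>'\<bar> powr p) \<partial>M)"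
    using X2 X3 by (intro nn_integral_cmult) measurable
  also have "(\<integral>\<^sup>+\<omega>'. ennreal (\<bar>X2 \<omega>'\<bar> powr p * \<bar>X3 \<omega>'\<bar> powr p) \<partial>M)
      = (\<integral>\<^sup>+\<omega>'. (\<integral>\<^sup>+\<omega>. ennreal (\<bar>X2 \<omega>\<bar> powr p * \<bar>X3 \<omega>'\<bar> powr p) \<partial>M) \<partial>M)"
    by (rule cond[OF P ind2, where h="\<lambda>x v. ennreal (\<bar>x\<bar> powr p * \<bar>v\<bar> powr p)"]) measurable
  also have "\<dots> = (\<integral>\<^sup>+\<omega>'. (\<integral>\<^sup>+\<omega>. ennreal (\<bar>X2 \<omega>\<bar> powr p) \<partial>M) * ennreal (\<bar>X3 \<omega>'\<bar> powr p) \<partial>M)"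
  proof (rule nn_integral_cong)
    fix \<omega>'
    show "(\<integral>\<^sup>+\<omega>. ennreal (\<bar>X2 \<omega>\<bar> powr p * \<bar>X3 \<omega>'\<bar> powr p) \<partial>M) = (\<integral>\<^sup>+\<omega>. ennreal (\<bar>X2 \<omega>\<bar> powr p) \<partial>M) * ennreal (\<bar>X3 \<omega>'\<bar> powr p)"
      using X2 by (simp add: ennreal_mult nn_integral_multc)
  qed
  also have "\<dots> = (\<integral>\<^sup>+\<omega>. ennreal (\<bar>X2 \<omega>\<bar> powr p) \<partial>M) * (\<integral>\<^sup>+\<omega>'. ennreal (\<bar>X3 \<omega>'\<bar> powr p) \<partial>M)"
    using X3 by (intro nn_integral_cmult) measurable
  also have "\<dots> \<le> ennreal (1 + 4 * p / (al - p)) * ennreal (1 + 4 * p / (1 - p))"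
    using p al by (intro mult_mono L2[OF P X2] L2[OF P X3] tX2 tX3) auto
  finally have "(\<integral>\<^sup>+\<omega>. ennreal (min 1 (a * \<bar>X \<omega> * (X2 \<omega> * X3 \<omega>)\<bar>)) \<partial>M)
     \<le> ennreal (K1 * a powr p) * (ennreal (1 + 4 * p / (al - p)) * ennreal (1 + 4 * p / (1 - p)))"
    by (simp add: mult_left_mono)
  also have "\<dots> = ennreal (K1 * a powr p * ((1 + 4 * p / (al - p)) * (1 + 4 * p / (1 - p))))"
    using p al K1 by (simp add: ennreal_mult)
  finally show ?thesis by (simp add: K1_def)
qed



definition Kc :: "real \<Rightarrow> real" where "Kc al = 72 / (1 - al) * (1 + 4 / (1 - al))"

lemma P1:
  assumes P: "prob_space M"
    and X: "X \<in> borel_measurable M" and X2: "X2 \<in> borel_measurable M" and X3: "X3 \<in> borel_measurable M"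
    and al: "0 < al" "al < 1" and a: "a > 0"
    and tX: "\<And>y. y > 0 \<Longrightarrow> measure M {\<omega>\<in>space M. \<bar>X \<omega>\<bar> \<ge> y} \<le> 4 * y powr (-al)"
    and tX2: "\<And>y. y > 0 \<Longrightarrow> measure M {\<omega>\<in>space M. \<bar>X2 \<omega>\<bar> \<ge> y} \<le> 4 * y powr (-al)"
    and tX3: "\<And>y. y > 0 \<Longrightarrow> measure M {\<omega>\<in>space M. \<bar>X3 \<omega>\<bar> \<ge> y} \<le> 4 * y powr (-1)"
    and ind1: "prob_space.indep_var M borel X borel (\<lambda>\<omega>. X2 \<omega> * X3 \<omega>)"
    and ind2: "prob_space.indep_var M borel X2 borel X3"
  shows "(\<integral>\<^sup>+\<omega>. ennreal (min 1 (a * \<bar>X \<omega> * (X2 \<omega> * X3 \<omega>)\<bar>)) \<partial>M)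
     \<le> ennreal (Kc al * a powr al * (1 + max 0 (ln (1 / a))))"
proof -
  interpret prob_space M by fact
  have Kc1: "Kc al \<ge> 1"
  proof -
    have "72 / (1 - al) \<ge> 1" using al by (simp add: field_simps)
    moreover have "1 + 4 / (1 - al) \<ge> 1" using al by simp
    ultimately show ?thesis unfolding Kc_def by (metis mult_mono' mult_1 order_trans zero_le_one)
  qed
  show ?thesis
  proof (cases "a \<ge> 1")
    case True
    have le1: "(\<integral>\<^sup>+\<omega>. ennreal (min 1 (a * \<bar>X \<omega> * (X2 \<omega> * X3 \<omega>)\<bar>)) \<partial>M) \<le> ennreal 1"
    proof -
      have "(\<integral>\<^sup>+\<omega>. ennreal (min 1 (a * \<bar>X \<omega> * (X2 \<omega> * X3 \<omega>)\<bar>)) \<partial>M) \<le> (\<integral>\<^sup>+\<omega>. 1 \<partial>M)"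
        by (intro nn_integral_mono) auto
      then show ?thesis by (simp add: emeasure_space_1)
    qed
    have "1 \<le> a powr al" using True al by (simp add: ge_one_powr_ge_zero)
    then have "1 \<le> Kc al * a powr al" using Kc1 by (metis mult_mono' mult_1 order_trans zero_le_one)
    moreover have "1 \<le> 1 + max 0 (ln (1 / a))" by simp
    ultimately have "1 \<le> Kc al * a powr al * (1 + max 0 (ln (1 / a)))"
      by (metis mult_mono' mult_1 order_trans zero_le_one)
    then show ?thesis using le1 by (meson ennreal_leI order_trans)
  next
    case False
    define L where "L = ln (1 / a)"
    have L: "L > 0" using False a by (simp add: L_def)
    define d where "d = al / (2 * (1 + L))"
    define p where "p = al - d"
    have d: "0 < d" "d \<le> al / 2" using al L by (auto simp: d_def field_simps)
    have p: "0 < p" "p < al" using d al by (auto simp: p_def)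
    have main: "(\<integral>\<^sup>+\<omega>. ennreal (min 1 (a * \<bar>X \<omega> * (X2 \<omega> * X3 \<omega>)\<bar>)) \<partial>M)
       \<le> ennreal (4 / (1 - al) * a powr p * ((1 + 4 * p / (al - p)) * (1 + 4 * p / (1 - p))))"
      by (rule P0[OF P X X2 X3 al p a tX tX2 tX3 ind1 ind2])
    have e1: "a powr p \<le> 2 * a powr al"
    proof -
      have eq1: "a powr p = a powr al * a powr (- d)" using a by (simp add: p_def powr_diff powr_minus_divide)
      have eq2: "a powr (- d) = exp (d * L)" using a by (simp add: powr_def L_def ln_div)
      have dL: "d * L \<le> 1 / 2"
      proof -
        have "d * L = al / 2 * (L / (1 + L))" using L by (simp add: d_def field_simps)
        also have "\<dots> \<le> 1 / 2 * 1" using al L by (intro mult_mono) (auto simp: field_simps)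
        finally show ?thesis by simp
      qed
      have e12: "exp (1 / 2 :: real) \<le> 2"
      proof -
        have e: "exp (1 / 2 :: real) * exp (1 / 2) = exp 1" by (simp flip: exp_add)
        show ?thesis
        proof (rule ccontr)
          assume "\<not> exp (1 / 2 :: real) \<le> 2"
          then have "2 * 2 < exp (1 / 2 :: real) * exp (1 / 2)"
            by (intro mult_strict_mono) auto
          then show False using e exp_le by simp
        qed
      qed
      have "exp (d * L) \<le> 2" using dL e12 by (meson exp_le_cancel_iff order_trans)
      then have "a powr al * a powr (- d) \<le> a powr al * 2" using eq2 by (simp add: mult_left_mono)
      then show ?thesis using eq1 by simp
    qed
    have e2: "1 + 4 * p / (al - p) \<le> 9 * (1 + L)"
    proof -
      have "al - p = d" by (simp add: p_def)
      then have "4 * p / (al - p) \<le> 4 * al / d" using p d by (simp add: divide_right_mono)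
      also have "4 * al / d = 8 * (1 + L)" using al L by (simp add: d_def field_simps)
      finally show ?thesis using L by simp
    qed
    have e3: "1 + 4 * p / (1 - p) \<le> 1 + 4 / (1 - al)"
    proof -
      have h1: "p * (2 - al) \<le> al * (2 - al)" using p al by (intro mult_right_mono) auto
      have h2: "0 \<le> (1 - al) * (1 - al)" by simp
      have "4 * p / (1 - p) \<le> 4 / (1 - al)" using p al h1 h2 by (simp add: field_simps algebra_simps)
      then show ?thesis by simp
    qed
    have "4 / (1 - al) * a powr p * ((1 + 4 * p / (al - p)) * (1 + 4 * p / (1 - p)))
        \<le> 4 / (1 - al) * (2 * a powr al) * ((9 * (1 + L)) * (1 + 4 / (1 - al)))"
    proof -
      have nn1: "0 \<le> 1 + 4 * p / (al - p)" using p by simp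
      have nn2: "0 \<le> 1 + 4 * p / (1 - p)" using p al by simp
      have nn3: "0 \<le> 4 / (1 - al)" using al by simp
      show ?thesis using al p e1 e2 e3 nn1 nn2 nn3 L
        by (intro mult_mono) auto
    qed
    also have "\<dots> = Kc al * a powr al * (1 + max 0 (ln (1 / a)))"
      using L al by (simp add: Kc_def L_def field_simps)
    finally show ?thesis using main by (meson ennreal_leI order_trans)
  qed
qed



lemma sum_min_ge1:
  fixes f :: "'b \<Rightarrow> real"
  assumes fin: "finite T" and x: "x > 0" and gt: "(\<Sum>k\<in>T. f k) > x"
  shows "(\<Sum>k\<in>T. min 1 (\<bar>f k\<bar> / x)) \<ge> 1"
proof (cases "\<exists>k\<in>T. \<bar>f k\<bar> \<ge> x")
  case True
  then obtain k where k: "k \<in> T" "\<bar>f k\<bar> \<ge> x" by blast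
  have "1 = min 1 (\<bar>f k\<bar> / x)" using k x by simp
  also have "\<dots> \<le> (\<Sum>k\<in>T. min 1 (\<bar>f k\<bar> / x))"
    using fin k x by (intro member_le_sum) auto
  finally show ?thesis .
next
  case False
  then have "(\<Sum>k\<in>T. min 1 (\<bar>f k\<bar> / x)) = (\<Sum>k\<in>T. \<bar>f k\<bar> / x)"
    using x by (intro sum.cong) auto
  also have "\<dots> = (\<Sum>k\<in>T. \<bar>f k\<bar>) / x" by (simp add: sum_divide_distrib)
  also have "(\<Sum>k\<in>T. \<bar>f k\<bar>) \<ge> (\<Sum>k\<in>T. f k)" by (intro sum_mono) auto
  then have "(\<Sum>k\<in>T. \<bar>f k\<bar>) / x \<ge> 1" using gt x by (simp add: field_simps)
  finally show ?thesis by simp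
qed

lemma term_bound:
  fixes bb x al :: real
  assumes b: "bb \<noteq> 0" and x: "x > 0" and al: "0 < al" and K: "K \<ge> 0"
  shows "K * (\<bar>bb\<bar> / x) powr al * (1 + max 0 (ln (1 / (\<bar>bb\<bar> / x))))
    \<le> K * (1 + log_plus x) / x powr al * (\<bar>bb\<bar> powr al * (1 + log_plus (1 / \<bar>bb\<bar>)))"
proof -
  have lnsplit: "ln (1 / (\<bar>bb\<bar> / x)) = ln x + ln (1 / \<bar>bb\<bar>)"
    using b x by (simp add: ln_div ln_mult)
  have "max 0 (ln (1 / (\<bar>bb\<bar> / x))) \<le> log_plus x + log_plus (1 / \<bar>bb\<bar>)"
    unfolding lnsplit log_plus_def by auto
  moreover have "0 \<le> log_plus x * log_plus (1 / \<bar>bb\<bar>)" by (simp add: log_plus_def)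
  moreover have "(1 + log_plus x) * (1 + log_plus (1 / \<bar>bb\<bar>)) = 1 + log_plus x + log_plus (1 / \<bar>bb\<bar>) + log_plus x * log_plus (1 / \<bar>bb\<bar>)"
    by (simp add: algebra_simps)
  ultimately have "1 + max 0 (ln (1 / (\<bar>bb\<bar> / x))) \<le> (1 + log_plus x) * (1 + log_plus (1 / \<bar>bb\<bar>))"
    by linarith
  moreover have "(\<bar>bb\<bar> / x) powr al = \<bar>bb\<bar> powr al / x powr al"
    using b x by (simp add: powr_divide)
  moreover have "0 \<le> K * (\<bar>bb\<bar> / x) powr al" using K by simp
  ultimately have "K * (\<bar>bb\<bar> / x) powr al * (1 + max 0 (ln (1 / (\<bar>bb\<bar> / x))))
      \<le> K * (\<bar>bb\<bar> powr al / x powr al) * ((1 + log_plus x) * (1 + log_plus (1 / \<bar>bb\<bar>)))"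
    by (metis mult_left_mono)
  also have "\<dots> = K * (1 + log_plus x) / x powr al * (\<bar>bb\<bar> powr al * (1 + log_plus (1 / \<bar>bb\<bar>)))"
    by (simp add: field_simps)
  finally show ?thesis .
qed



lemma main_lemma:
  fixes \<alpha> x :: real and M :: "'a measure" and eps :: "nat \<Rightarrow> 'a \<Rightarrow> real" and C0 :: "'a \<Rightarrow> real"
    and C :: "nat \<Rightarrow> nat \<Rightarrow> 'a \<Rightarrow> real" and b :: "nat \<Rightarrow> nat \<Rightarrow> real"
  assumes al: "0 < \<alpha>" "\<alpha> < 1" and P: "prob_space M"
    and ind: "prob_space.indep_vars M (\<lambda>_. borel) (joint_family eps C0 C) rv_index_set"
    and ch_eps: "\<forall>t \<ge> 1. \<forall>u. char (distr M borel (eps t)) u = complex_of_real (exp (- (\<bar>u\<bar> powr \<alpha>)))"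
    and ch_C: "\<forall>s \<ge> 1. \<forall>t \<ge> 1. \<forall>u. char (distr M borel (C s t)) u = complex_of_real (exp (- \<bar>u\<bar>))"
    and x: "x > 0"
  shows "measure M {\<omega> \<in> space M.
               (\<Sum>s\<in>{1..n}. \<Sum>t\<in>{s<..n}. b s t * C s t \<omega> * eps s \<omega> * eps t \<omega>) > x}
            \<le> Kc \<alpha> * (1 + log_plus x) / x powr \<alpha> * Gamma_n \<alpha> n b"
proof -
  interpret prob_space M by (rule P)
  let ?J = "joint_family eps C0 C"
  have rv: "\<And>i. i \<in> rv_index_set \<Longrightarrow> random_variable borel (?J i)"
    using ind unfolding indep_vars_def by auto
  have meps[measurable]: "eps t \<in> borel_measurable M" if "t \<ge> 1" for t
    using rv[of "Eps t"] that by (simp add: rv_index_set_def joint_family_def)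
  have mC[measurable]: "C s t \<in> borel_measurable M" if "s \<ge> 1" "t \<ge> 1" for s t
    using rv[of "Cau s t"] that by (simp add: rv_index_set_def joint_family_def)
  have tailgen: "measure M {\<omega>\<in>space M. \<bar>X \<omega>\<bar> \<ge> y} \<le> 4 * y powr (-a)"
    if X: "X \<in> borel_measurable M" and a: "0 < a" "a \<le> 1"
      and ch: "\<And>u. char (distr M borel X) u = complex_of_real (exp (- (\<bar>u\<bar> powr a)))"
      and y: "y > 0" for X a y
  proof -
    have "measure M {\<omega>\<in>space M. \<bar>X \<omega>\<bar> \<ge> y} = measure (distr M borel X) {x. \<bar>x\<bar> \<ge> y}"
      using X by (subst measure_distr) (auto intro!: arg_cong[where f="measure M"])
    also have "\<dots> \<le> 4 * y powr (-a)"
      using X a ch y by (intro tail_char) auto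
    finally show ?thesis .
  qed
  have teps: "measure M {\<omega>\<in>space M. \<bar>eps t \<omega>\<bar> \<ge> y} \<le> 4 * y powr (-\<alpha>)" if "t \<ge> 1" "y > 0" for t y
    using that al ch_eps by (intro tailgen) auto
  have tC: "measure M {\<omega>\<in>space M. \<bar>C s t \<omega>\<bar> \<ge> y} \<le> 4 * y powr (-1)" if "s \<ge> 1" "t \<ge> 1" "y > 0" for s t y
    using that ch_C by (intro tailgen) auto
  have ind1: "indep_var borel (eps s) borel (\<lambda>\<omega>. eps t \<omega> * C s t \<omega>)" if "1 \<le> s" "s < t" for s t
  proof -
    have "indep_vars (\<lambda>_. borel) ?J (insert (Eps s) {Eps t, Cau s t})"
      using that by (intro indep_vars_subset[OF ind]) (auto simp: rv_index_set_def)
    from indep_vars_prod[OF _ _ this] that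
    have "indep_var borel (?J (Eps s)) borel (\<lambda>\<omega>. \<Prod>i\<in>{Eps t, Cau s t}. ?J i \<omega>)" by auto
    then show ?thesis by (simp add: joint_family_def)
  qed
  have ind2: "indep_var borel (eps t) borel (C s t)" if "1 \<le> s" "s < t" for s t
  proof -
    have "indep_vars (\<lambda>_. borel) ?J (insert (Eps t) {Cau s t})"
      using that by (intro indep_vars_subset[OF ind]) (auto simp: rv_index_set_def)
    from indep_vars_prod[OF _ _ this] that
    have "indep_var borel (?J (Eps t)) borel (\<lambda>\<omega>. \<Prod>i\<in>{Cau s t}. ?J i \<omega>)" by auto
    then show ?thesis by (simp add: joint_family_def)
  qed
  define T where "T = Sigma {1..n} (\<lambda>s. {s<..n})"
  have finT: "finite T" by (simp add: T_def)
  have Tmem: "1 \<le> s \<and> s < t \<and> t \<le> n" if "(s, t) \<in> T" for s t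
    using that by (auto simp: T_def)
  define g where "g = (\<lambda>(s, t). if b s t = 0 then 0 else \<bar>b s t\<bar> powr \<alpha> * (1 + log_plus (1 / \<bar>b s t\<bar>)))"
  define c where "c = Kc \<alpha> * (1 + log_plus x) / x powr \<alpha>"
  have c: "c \<ge> 0" unfolding c_def Kc_def using al x by (auto simp: log_plus_def)
  have g0: "g st \<ge> 0" for st unfolding g_def by (auto simp: log_plus_def split: prod.splits)
  define F where "F = (\<lambda>\<omega>. \<Sum>(s, t)\<in>T. min 1 (\<bar>b s t * C s t \<omega> * eps s \<omega> * eps t \<omega>\<bar> / x))"
  have sub: "{\<omega> \<in> space M. (\<Sum>s\<in>{1..n}. \<Sum>t\<in>{s<..n}. b s t * C s t \<omega> * eps s \<omega> * eps t \<omega>) > x}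
      \<subseteq> {\<omega> \<in> space M. 1 \<le> F \<omega>}"
  proof safe
    fix \<omega> assume "\<omega> \<in> space M" and gt: "x < (\<Sum>s\<in>{1..n}. \<Sum>t\<in>{s<..n}. b s t * C s t \<omega> * eps s \<omega> * eps t \<omega>)"
    have "(\<Sum>s\<in>{1..n}. \<Sum>t\<in>{s<..n}. b s t * C s t \<omega> * eps s \<omega> * eps t \<omega>) = (\<Sum>(s, t)\<in>T. b s t * C s t \<omega> * eps s \<omega> * eps t \<omega>)"
      unfolding T_def by (rule sum.Sigma) auto
    with gt have "x < (\<Sum>st\<in>T. (\<lambda>(s, t). b s t * C s t \<omega> * eps s \<omega> * eps t \<omega>) st)" by simp
    from sum_min_ge1[OF finT x this] show "1 \<le> F \<omega>"
      unfolding F_def by (simp add: case_prod_unfold)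
  qed
  have Fm: "F \<in> borel_measurable M"
    unfolding F_def
  proof (intro borel_measurable_sum)
    fix st assume "st \<in> T"
    then obtain s t where st: "st = (s, t)" "1 \<le> s" "s < t" "t \<le> n" using Tmem by (cases st) blast
    have "1 \<le> t" using st by simp
    then show "(\<lambda>\<omega>. case st of (s, t) \<Rightarrow> min 1 (\<bar>b s t * C s t \<omega> * eps s \<omega> * eps t \<omega>\<bar> / x)) \<in> borel_measurable M"
      using st by simp
  qed
  have F0: "F \<omega> \<ge> 0" for \<omega> unfolding F_def using x by (intro sum_nonneg) (auto split: prod.splits)
  have "emeasure M {\<omega> \<in> space M. (\<Sum>s\<in>{1..n}. \<Sum>t\<in>{s<..n}. b s t * C s t \<omega> * eps s \<omega> * eps t \<omega>) > x}
      \<le> emeasure M {\<omega> \<in> space M. 1 \<le> F \<omega>}"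
    using Fm by (intro emeasure_mono sub) measurable
  also have "\<dots> = (\<integral>\<^sup>+\<omega>. indicator {\<omega> \<in> space M. 1 \<le> F \<omega>} \<omega> \<partial>M)"
    using Fm by (subst nn_integral_indicator) auto
  also have "\<dots> \<le> (\<integral>\<^sup>+\<omega>. ennreal (F \<omega>) \<partial>M)"
    by (intro nn_integral_mono) (auto simp: indicator_def F0)
  also have "\<dots> = (\<integral>\<^sup>+\<omega>. (\<Sum>st\<in>T. ennreal ((\<lambda>(s, t). min 1 (\<bar>b s t * C s t \<omega> * eps s \<omega> * eps t \<omega>\<bar> / x)) st)) \<partial>M)"
    unfolding F_def using x by (intro nn_integral_cong sum_ennreal[symmetric]) (auto split: prod.splits)
  also have "\<dots> = (\<Sum>st\<in>T. (\<integral>\<^sup>+\<omega>. ennreal ((\<lambda>(s, t). min 1 (\<bar>b s t * C s t \<omega> * eps s \<omega> * eps t \<omega>\<bar> / x)) st) \<partial>M))"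
  proof (rule nn_integral_sum)
    fix st assume "st \<in> T"
    then obtain s t where st: "st = (s, t)" "1 \<le> s" "s < t" "t \<le> n" using Tmem by (cases st) blast
    then show "(\<lambda>\<omega>. ennreal ((\<lambda>(s, t). min 1 (\<bar>b s t * C s t \<omega> * eps s \<omega> * eps t \<omega>\<bar> / x)) st)) \<in> borel_measurable M"
      by simp
  qed
  also have "\<dots> \<le> (\<Sum>st\<in>T. ennreal (c * g st))"
  proof (rule sum_mono)
    fix st assume "st \<in> T"
    then obtain s t where st: "st = (s, t)" "1 \<le> s" "s < t" "t \<le> n" using Tmem by (cases st) blast
    show "(\<integral>\<^sup>+\<omega>. ennreal ((\<lambda>(s, t). min 1 (\<bar>b s t * C s t \<omega> * eps s \<omega> * eps t \<omega>\<bar> / x)) st) \<partial>M) \<le> ennreal (c * g st)"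
    proof (cases "b s t = 0")
      case True
      then show ?thesis using st by simp
    next
      case False
      define a where "a = \<bar>b s t\<bar> / x"
      have a: "a > 0" using False x by (simp add: a_def)
      have "(\<integral>\<^sup>+\<omega>. ennreal ((\<lambda>(s, t). min 1 (\<bar>b s t * C s t \<omega> * eps s \<omega> * eps t \<omega>\<bar> / x)) st) \<partial>M)
          = (\<integral>\<^sup>+\<omega>. ennreal (min 1 (a * \<bar>eps s \<omega> * (eps t \<omega> * C s t \<omega>)\<bar>)) \<partial>M)"
        using st x by (intro nn_integral_cong) (simp add: a_def abs_mult mult_ac)
      also have "\<dots> \<le> ennreal (Kc \<alpha> * a powr \<alpha> * (1 + max 0 (ln (1 / a))))"
        using st al a
        by (intro P1[OF P meps meps mC al a teps teps tC ind1 ind2]) auto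
      also have "\<dots> \<le> ennreal (c * g st)"
      proof (rule ennreal_leI)
        have Kpos: "Kc \<alpha> \<ge> 0" using al by (simp add: Kc_def)
        have gst: "g st = \<bar>b s t\<bar> powr \<alpha> * (1 + log_plus (1 / \<bar>b s t\<bar>))"
          using st False by (simp add: g_def)
        show "Kc \<alpha> * a powr \<alpha> * (1 + max 0 (ln (1 / a))) \<le> c * g st"
          unfolding c_def gst a_def by (rule term_bound[OF False x al(1) Kpos])
      qed
      finally show ?thesis .
    qed
  qed
  also have "\<dots> = ennreal (\<Sum>st\<in>T. c * g st)"
    using c g0 by (intro sum_ennreal) auto
  also have "(\<Sum>st\<in>T. c * g st) \<le> c * Gamma_n \<alpha> n b"
  proof -
    have "(\<Sum>st\<in>T. g st) \<le> (\<Sum>st\<in>{(s,t). s \<in> {1..n} \<and> t \<in> {1..n} \<and> s \<noteq> t}. g st)"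
      by (rule sum_mono2) (auto simp: T_def g0 intro: finite_subset[of _ "{1..n} \<times> {1..n}"])
    then show ?thesis
      using c by (simp add: sum_distrib_left[symmetric] Gamma_n_def g_def mult_left_mono)
  qed
  finally have fin: "emeasure M {\<omega> \<in> space M. (\<Sum>s\<in>{1..n}. \<Sum>t\<in>{s<..n}. b s t * C s t \<omega> * eps s \<omega> * eps t \<omega>) > x}
      \<le> ennreal (c * Gamma_n \<alpha> n b)" by (simp add: ennreal_leI)
  have "0 \<le> c * Gamma_n \<alpha> n b"
  proof -
    have "(\<Sum>st\<in>{(s,t). s \<in> {1..n} \<and> t \<in> {1..n} \<and> s \<noteq> t}. g st) \<ge> 0" by (intro sum_nonneg g0)
    then have "Gamma_n \<alpha> n b \<ge> 0" by (simp add: Gamma_n_def g_def)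
    then show ?thesis using c by simp
  qed
  with fin show ?thesis
    by (simp add: emeasure_eq_measure c_def)
qed


theorem lemmaA2:
  fixes \<alpha> :: real
  assumes "0 < \<alpha>" and "\<alpha> < 1"
  shows "\<exists>D > 0. \<forall>(M :: 'a measure) (eps :: nat \<Rightarrow> 'a \<Rightarrow> real) (C0 :: 'a \<Rightarrow> real)
            (C :: nat \<Rightarrow> nat \<Rightarrow> 'a \<Rightarrow> real).
      prob_space M
      \<and> prob_space.indep_vars M (\<lambda>_. borel) (joint_family eps C0 C) rv_index_set
      \<and> (\<forall>t \<ge> 1. \<forall>u. char (distr M borel (eps t)) u = complex_of_real (exp (- (\<bar>u\<bar> powr \<alpha>))))
      \<and> (\<forall>u. char (distr M borel C0) u = complex_of_real (exp (- \<bar>u\<bar>)))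
      \<and> (\<forall>s \<ge> 1. \<forall>t \<ge> 1. \<forall>u. char (distr M borel (C s t)) u = complex_of_real (exp (- \<bar>u\<bar>)))
      \<longrightarrow> (\<forall>(n::nat) (b :: nat \<Rightarrow> nat \<Rightarrow> real) (x::real). n \<ge> 1 \<and> x > 0 \<longrightarrow>
            measure M {\<omega> \<in> space M.
               (\<Sum>s\<in>{1..n}. \<Sum>t\<in>{s<..n}. b s t * C s t \<omega> * eps s \<omega> * eps t \<omega>) > x}
            \<le> D * (1 + log_plus x) / x powr \<alpha> * Gamma_n \<alpha> n b)"
proof -
  have "0 < 4 / (1 - \<alpha>)" using assms by simp
  then have "0 < 1 + 4 / (1 - \<alpha>)" by linarith
  then have Kpos: "Kc \<alpha> > 0" using assms unfolding Kc_def by (intro mult_pos_pos) auto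
  show ?thesis
    apply (rule exI[of _ "Kc \<alpha>"])
    apply (intro conjI allI impI)
     apply (rule Kpos)
    apply (elim conjE)
    apply (rule main_lemma[OF assms])
        apply assumption+
    done
qed

end
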